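(* Let $(\mathbb{S},\Sigma)$ be a measurable space, let $\{\mu_n\}_{n=1,2,\ldots}$ be a sequence of finite measures on $(\mathbb{S},\Sigma)$, and let $\{f_n\}_{n=1,2,\ldots}$ be a sequence of measurable $[-\infty,+\infty]$-valued functions on $\mathbb{S}$. Then there exists $N\in\{0,1,2,\ldots\}$ such that $\{f_{n+N}\}_{n=1,2,\ldots}$ is uniformly integrable with respect to $\{\mu_{n+N}\}_{n=1,2,\ldots}$ if and only if $\{f_n\}_{n=1,2,\ldots}$ is asymptotically uniformly integrable with respect to $\{\mu_n\}_{n=1,2,\ldots}$.
   Context: A sequence of measurable $[-\infty,+\infty]$-valued functions $\{f_n\}$ is uniformly integrable (u.i.) with respect to a sequence of finite measures $\{\mu_n\}$ if $\lim_{K\to+\infty}\sup_{n=1,2,\ldots}\int_{\mathbb{S}}|f_n(s)|\,\mathbf{1}\{s: |f_n(s)|\ge K\}\,\mu_n(ds)=0$, and asymptotically uniformly integrable (a.u.i.) with respect to $\{\mu_n\}$ if $\lim_{K\to+\infty}\limsup_{n\to\infty}\int_{\mathbb{S}}|f_n(s)|\,\mathbf{1}\{s: |f_n(s)|\ge K\}\,\mu_n(ds)=0$. *)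

theory Defs
  imports "HOL-Analysis.Analysis"
begin

text \<open>Sequences are indexed from 0 in Isabelle: index n here corresponds to n+1 in the paper.\<close>

definition tail_integral ::
  "(nat \<Rightarrow> 'a measure) \<Rightarrow> (nat \<Rightarrow> 'a \<Rightarrow> ereal) \<Rightarrow> nat \<Rightarrow> real \<Rightarrow> ennreal" where
  "tail_integral \<mu> f n K =
     (\<integral>\<^sup>+ s. e2ennreal \<bar>f n s\<bar> * indicator {s. ereal K \<le> \<bar>f n s\<bar>} s \<partial>(\<mu> n))"

definition unif_integrable ::
  "(nat \<Rightarrow> 'a measure) \<Rightarrow> (nat \<Rightarrow> 'a \<Rightarrow> ereal) \<Rightarrow> bool" where
  "unif_integrable \<mu> f \<longleftrightarrow>
     ((\<lambda>K::real. SUP n. tail_integral \<mu> f n K) \<longlongrightarrow> 0) at_top"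

definition asymp_unif_integrable ::
  "(nat \<Rightarrow> 'a measure) \<Rightarrow> (nat \<Rightarrow> 'a \<Rightarrow> ereal) \<Rightarrow> bool" where
  "asymp_unif_integrable \<mu> f \<longleftrightarrow>
     ((\<lambda>K::real. limsup (\<lambda>n. tail_integral \<mu> f n K)) \<longlongrightarrow> 0) at_top"

end

theory Submission
  imports Defs
begin

lemma meas_integrand:
  fixes g :: "'a \<Rightarrow> ereal"
  assumes "g \<in> borel_measurable M"
  shows "(\<lambda>s. e2ennreal \<bar>g s\<bar> * indicator {s. ereal K \<le> \<bar>g s\<bar>} s) \<in> borel_measurable M"
  using assms by measurable

lemma tail_mono:
  fixes g :: "'a \<Rightarrow> ereal"
  assumes "K \<le> K'"
  shows "(\<integral>\<^sup>+ s. e2ennreal \<bar>g s\<bar> * indicator {s. ereal K' \<le> \<bar>g s\<bar>} s \<partial>M)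
      \<le> (\<integral>\<^sup>+ s. e2ennreal \<bar>g s\<bar> * indicator {s. ereal K \<le> \<bar>g s\<bar>} s \<partial>M)"
proof -
  have "\<And>x. ereal K' \<le> x \<Longrightarrow> ereal K \<le> x" using assms by (meson ereal_less_eq(3) order_trans)
  then show ?thesis by (intro nn_integral_mono) (auto simp: indicator_def)
qed

lemma tail_tendsto:
  fixes g :: "'a \<Rightarrow> ereal"
  assumes gm: "g \<in> borel_measurable M"
    and fin: "(\<integral>\<^sup>+ s. e2ennreal \<bar>g s\<bar> * indicator {s. ereal K0 \<le> \<bar>g s\<bar>} s \<partial>M) < \<infinity>"
  shows "((\<lambda>K. \<integral>\<^sup>+ s. e2ennreal \<bar>g s\<bar> * indicator {s. ereal K \<le> \<bar>g s\<bar>} s \<partial>M) \<longlongrightarrow> 0) at_top"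
proof -
  define h where "h = (\<lambda>K s. e2ennreal \<bar>g s\<bar> * indicator {s. ereal K \<le> \<bar>g s\<bar>} s)"
  have hm: "\<And>K. h K \<in> borel_measurable M" unfolding h_def using meas_integrand[OF gm] by blast
  have ae: "AE s in M. h K0 s \<noteq> \<infinity>"
    using fin hm by (intro nn_integral_PInf_AE) (auto simp: h_def)
  have ae2: "AE s in M. \<bar>g s\<bar> \<noteq> \<infinity>"
    using ae by eventually_elim (auto simp: h_def)
  have INF0: "(INF i. integral\<^sup>N M (h (K0 + real i))) = 0"
  proof -
    have "(\<integral>\<^sup>+ x. (INF i. h (K0 + real i) x) \<partial>M) = (INF i. integral\<^sup>N M (h (K0 + real i)))"
    proof (rule nn_integral_monotone_convergence_INF_AE')
      fix i :: nat
      have "\<And>x. ereal (K0 + real (Suc i)) \<le> x \<Longrightarrow> ereal (K0 + real i) \<le> x"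
      proof -
        fix x assume "ereal (K0 + real (Suc i)) \<le> x"
        moreover have "ereal (K0 + real i) \<le> ereal (K0 + real (Suc i))" by simp
        ultimately show "ereal (K0 + real i) \<le> x" by (rule order_trans[rotated])
      qed
      then show "AE x in M. h (K0 + real (Suc i)) x \<le> h (K0 + real i) x"
        by (intro AE_I2) (auto simp: h_def indicator_def)
      show "h (K0 + real i) \<in> borel_measurable M" by (rule hm)
    next
      show "(\<integral>\<^sup>+ x. h (K0 + real 0) x \<partial>M) < \<infinity>" using fin by (simp add: h_def)
    qed
    moreover have "(\<integral>\<^sup>+ x. (INF i. h (K0 + real i) x) \<partial>M) = 0"
    proof -
      have "AE x in M. (INF i. h (K0 + real i) x) = 0"
        using ae2
      proof eventually_elim
        case (elim x)
        then obtain r where r: "\<bar>g x\<bar> = ereal r" by (cases "g x") auto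
        obtain i :: nat where "r < K0 + real i"
          using reals_Archimedean2[of "r - K0"] by (auto simp: algebra_simps)
        then have "h (K0 + real i) x = 0" using r by (auto simp: h_def indicator_def)
        then show ?case by (metis (no_types, lifting) INF_lower antisym zero_le UNIV_I)
      qed
      then show ?thesis by (simp add: nn_integral_cong_AE)
    qed
    ultimately show ?thesis by simp
  qed
  have "((\<lambda>K. integral\<^sup>N M (h K)) \<longlongrightarrow> 0) at_top"
  proof (rule order_tendstoI)
    fix a :: ennreal assume "a < 0" then show "eventually (\<lambda>K. a < integral\<^sup>N M (h K)) at_top" by simp
  next
    fix a :: ennreal assume "0 < a"
    then have "(INF i. integral\<^sup>N M (h (K0 + real i))) < a" using INF0 by simp
    then obtain i where i: "integral\<^sup>N M (h (K0 + real i)) < a"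
      by (auto simp: INF_less_iff)
    show "eventually (\<lambda>K. integral\<^sup>N M (h K) < a) at_top"
      using eventually_ge_at_top[of "K0 + real i"]
    proof eventually_elim
      case (elim K)
      have "integral\<^sup>N M (h K) \<le> integral\<^sup>N M (h (K0 + real i))"
        unfolding h_def by (rule tail_mono[OF elim])
      then show ?case using i by simp
    qed
  qed
  then show ?thesis by (simp add: h_def)
qed

theorem theorem2p2:
  fixes \<Sigma> :: "'a measure"
    and \<mu> :: "nat \<Rightarrow> 'a measure"
    and f :: "nat \<Rightarrow> 'a \<Rightarrow> ereal"
  assumes sets_\<mu>: "\<And>n. sets (\<mu> n) = sets \<Sigma>"
    and fin: "\<And>n. finite_measure (\<mu> n)"
    and meas: "\<And>n. f n \<in> borel_measurable \<Sigma>"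
  shows "(\<exists>N::nat. unif_integrable (\<lambda>n. \<mu> (n + N)) (\<lambda>n. f (n + N)))
         \<longleftrightarrow> asymp_unif_integrable \<mu> f"
proof -
  define T where "T = (\<lambda>n K. tail_integral \<mu> f n K)"
  have shiftT: "\<And>N n K. tail_integral (\<lambda>n. \<mu> (n + N)) (\<lambda>n. f (n + N)) n K = T (n+N) K"
    by (simp add: T_def tail_integral_def)
  have fm: "\<And>n. f n \<in> borel_measurable (\<mu> n)"
    using measurable_cong_sets[OF sets_\<mu> refl] meas by blast
  have Tmono: "\<And>n K K'. K \<le> K' \<Longrightarrow> T n K' \<le> T n K"
    unfolding T_def tail_integral_def by (rule tail_mono)
  have Tlim: "\<And>n K0. T n K0 < \<infinity> \<Longrightarrow> ((\<lambda>K. T n K) \<longlongrightarrow> 0) at_top"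
    unfolding T_def tail_integral_def by (rule tail_tendsto[OF fm])
  show ?thesis
  proof
    assume "\<exists>N. unif_integrable (\<lambda>n. \<mu> (n + N)) (\<lambda>n. f (n + N))"
    then obtain N where N: "((\<lambda>K. SUP n. T (n+N) K) \<longlongrightarrow> 0) at_top"
      by (auto simp: unif_integrable_def shiftT)
    have le: "limsup (\<lambda>n. T n K) \<le> (SUP n. T (n+N) K)" for K
    proof -
      have "limsup (\<lambda>n. T n K) = limsup (\<lambda>n. T (n+N) K)" by (rule limsup_shift_k[symmetric])
      also have "\<dots> \<le> (SUP n. T (n+N) K)"
        by (intro Limsup_bounded always_eventually) (auto intro: SUP_upper)
      finally show ?thesis .
    qed
    have "((\<lambda>K. limsup (\<lambda>n. T n K)) \<longlongrightarrow> 0) at_top"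
      by (intro tendsto_sandwich[OF _ _ tendsto_const N] always_eventually allI le zero_le)
    then show "asymp_unif_integrable \<mu> f" by (simp add: asymp_unif_integrable_def T_def)
  next
    assume "asymp_unif_integrable \<mu> f"
    then have A': "((\<lambda>K. limsup (\<lambda>n. T n K)) \<longlongrightarrow> 0) at_top"
      by (simp add: asymp_unif_integrable_def T_def)
    have "eventually (\<lambda>K. limsup (\<lambda>n. T n K) < 1) at_top"
      using A' by (rule order_tendstoD) simp
    then obtain K0 where K0: "limsup (\<lambda>n. T n K0) < 1"
      by (auto simp: eventually_at_top_linorder)
    then have "eventually (\<lambda>n. T n K0 < 1) sequentially" by (rule Limsup_lessD)
    then obtain N where N: "\<And>n. n \<ge> N \<Longrightarrow> T n K0 < 1" by (auto simp: eventually_sequentially)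
    have "((\<lambda>K. SUP n. T (n+N) K) \<longlongrightarrow> 0) at_top"
    proof (rule order_tendstoI)
      fix a :: ennreal assume "a < 0"
      then show "eventually (\<lambda>K. a < (SUP n. T (n+N) K)) at_top" by simp
    next
      fix e :: ennreal assume "0 < e"
      then obtain d :: ennreal where d: "0 < d" "d < e" using dense by blast
      have "eventually (\<lambda>K. limsup (\<lambda>n. T n K) < d) at_top"
        using A' d(1) by (rule order_tendstoD)
      then obtain K1' where K1': "\<And>K. K \<ge> K1' \<Longrightarrow> limsup (\<lambda>n. T n K) < d"
        by (auto simp: eventually_at_top_linorder)
      define K1 where "K1 = max K0 K1'"
      have "limsup (\<lambda>n. T n K1) < d" using K1' by (simp add: K1_def)
      then have "eventually (\<lambda>n. T n K1 < d) sequentially" by (rule Limsup_lessD)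
      then obtain M where M: "\<And>n. n \<ge> M \<Longrightarrow> T n K1 < d" by (auto simp: eventually_sequentially)
      have ev: "eventually (\<lambda>K. \<forall>n\<in>{N..<M}. T n K < d) at_top"
      proof (rule eventually_ball_finite)
        show "\<forall>n\<in>{N..<M}. eventually (\<lambda>K. T n K < d) at_top"
        proof
          fix n assume "n \<in> {N..<M}"
          then have "T n K0 < 1" using N by auto
          then have Tfin: "T n K0 < \<infinity>" using ennreal_one_less_top unfolding infinity_ennreal_def by (rule less_trans)
          show "eventually (\<lambda>K. T n K < d) at_top"
            using order_tendstoD(2)[OF Tlim[OF Tfin] d(1)] .
        qed
      qed simp
      show "eventually (\<lambda>K. (SUP n. T (n+N) K) < e) at_top"
        using ev eventually_ge_at_top[of K1]
      proof eventually_elim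
        case (elim K)
        have "(SUP n. T (n+N) K) \<le> d"
        proof (rule SUP_least)
          fix n
          show "T (n+N) K \<le> d"
          proof (cases "n + N \<ge> M")
            case True
            then show ?thesis using M[OF True] Tmono[OF elim(2), of "n+N"] by simp
          next
            case False
            then have "n + N \<in> {N..<M}" by simp
            then have "T (n + N) K < d" using elim(1) by blast
            then show ?thesis by simp
          qed
        qed
        then show ?case using d(2) by simp
      qed
    qed
    then show "\<exists>N. unif_integrable (\<lambda>n. \<mu> (n + N)) (\<lambda>n. f (n + N))"
      by (auto simp: unif_integrable_def shiftT)
  qed
qed

end
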